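(* Let $G=(V,E)$ be a finite, simple, connected reflective graph and $x\in V$. Assume the subgraph induced on $S_1(x)$ is connected. Then $S_1(x)$ is isometric.
   Context: $d$ is the combinatorial distance, $S_n(x)=\{v:d(v,x)=n\}$. For adjacent $x\sim y$ let $V_x^y=\{v: d(v,x)<d(v,y)\}$, $V^{xy}=\{v:d(v,x)=d(v,y)\}$. A reflection from $x$ to $y$ is a graph automorphism $\phi$ with $\phi\circ\phi=\mathrm{id}$, $\phi(x)=y$, such that the edges between $V_x^y$ and $V_y^x$ are exactly $\{\{x',\phi(x')\}:x'\in V_x^y\}$ and $\phi$ fixes $V^{xy}$ pointwise. A graph is reflective if every edge admits a reflection. A set $W\subseteq V$ is isometric if for all $w,w'\in W$ there is a shortest path in $G$ from $w$ to $w'$ all of whose vertices lie in $W$. *)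

theory Defs
  imports Main
begin

definition simple_graph :: "'a set \<Rightarrow> ('a \<Rightarrow> 'a \<Rightarrow> bool) \<Rightarrow> bool" where
  "simple_graph V E \<longleftrightarrow> finite V \<and> (\<forall>u v. E u v \<longrightarrow> u \<in> V \<and> v \<in> V)
     \<and> (\<forall>u v. E u v \<longrightarrow> E v u) \<and> (\<forall>u. \<not> E u u)"

(* a walk given as the list of its vertices; its length is length xs - 1 *)
fun walk :: "('a \<Rightarrow> 'a \<Rightarrow> bool) \<Rightarrow> 'a list \<Rightarrow> bool" where
  "walk E [] = False"
| "walk E [v] = True"
| "walk E (u # v # vs) = (E u v \<and> walk E (v # vs))"

definition walk_betw :: "('a \<Rightarrow> 'a \<Rightarrow> bool) \<Rightarrow> 'a \<Rightarrow> 'a list \<Rightarrow> 'a \<Rightarrow> bool" where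
  "walk_betw E u xs v \<longleftrightarrow> walk E xs \<and> hd xs = u \<and> last xs = v"

definition connected_graph :: "'a set \<Rightarrow> ('a \<Rightarrow> 'a \<Rightarrow> bool) \<Rightarrow> bool" where
  "connected_graph V E \<longleftrightarrow> (\<forall>u\<in>V. \<forall>v\<in>V. \<exists>xs. walk_betw E u xs v)"

definition dist :: "('a \<Rightarrow> 'a \<Rightarrow> bool) \<Rightarrow> 'a \<Rightarrow> 'a \<Rightarrow> nat" where
  "dist E u v = (LEAST n. \<exists>xs. walk_betw E u xs v \<and> length xs = Suc n)"

definition sphere :: "'a set \<Rightarrow> ('a \<Rightarrow> 'a \<Rightarrow> bool) \<Rightarrow> nat \<Rightarrow> 'a \<Rightarrow> 'a set" where
  "sphere V E n x = {v \<in> V. dist E v x = n}"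

definition halfspace :: "'a set \<Rightarrow> ('a \<Rightarrow> 'a \<Rightarrow> bool) \<Rightarrow> 'a \<Rightarrow> 'a \<Rightarrow> 'a set" where
  "halfspace V E x y = {v \<in> V. dist E v x < dist E v y}"

definition midset :: "'a set \<Rightarrow> ('a \<Rightarrow> 'a \<Rightarrow> bool) \<Rightarrow> 'a \<Rightarrow> 'a \<Rightarrow> 'a set" where
  "midset V E x y = {v \<in> V. dist E v x = dist E v y}"

definition graph_automorphism :: "'a set \<Rightarrow> ('a \<Rightarrow> 'a \<Rightarrow> bool) \<Rightarrow> ('a \<Rightarrow> 'a) \<Rightarrow> bool" where
  "graph_automorphism V E \<phi> \<longleftrightarrow> bij_betw \<phi> V V
     \<and> (\<forall>u\<in>V. \<forall>v\<in>V. E (\<phi> u) (\<phi> v) \<longleftrightarrow> E u v)"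

definition reflection :: "'a set \<Rightarrow> ('a \<Rightarrow> 'a \<Rightarrow> bool) \<Rightarrow> 'a \<Rightarrow> 'a \<Rightarrow> ('a \<Rightarrow> 'a) \<Rightarrow> bool" where
  "reflection V E x y \<phi> \<longleftrightarrow>
     graph_automorphism V E \<phi>
     \<and> (\<forall>v\<in>V. \<phi> (\<phi> v) = v)
     \<and> \<phi> x = y
     \<and> {{a, b} | a b. a \<in> halfspace V E x y \<and> b \<in> halfspace V E y x \<and> E a b}
        = {{a, \<phi> a} | a. a \<in> halfspace V E x y}
     \<and> (\<forall>v\<in>midset V E x y. \<phi> v = v)"

definition reflective :: "'a set \<Rightarrow> ('a \<Rightarrow> 'a \<Rightarrow> bool) \<Rightarrow> bool" where
  "reflective V E \<longleftrightarrow> (\<forall>x y. E x y \<longrightarrow> (\<exists>\<phi>. reflection V E x y \<phi>))"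

definition induced_connected :: "('a \<Rightarrow> 'a \<Rightarrow> bool) \<Rightarrow> 'a set \<Rightarrow> bool" where
  "induced_connected E W \<longleftrightarrow>
     (\<forall>u\<in>W. \<forall>v\<in>W. \<exists>xs. walk_betw E u xs v \<and> set xs \<subseteq> W)"

definition isometric :: "('a \<Rightarrow> 'a \<Rightarrow> bool) \<Rightarrow> 'a set \<Rightarrow> bool" where
  "isometric E W \<longleftrightarrow>
     (\<forall>w\<in>W. \<forall>w'\<in>W. \<exists>xs. walk_betw E w xs w' \<and> length xs = Suc (dist E w w')
        \<and> set xs \<subseteq> W)"

end

theory Submission
  imports Defs
begin

lemma walk_nonempty: "walk E xs \<Longrightarrow> xs \<noteq> []"
  by (cases xs) auto

lemma dist_le:
  assumes "walk_betw E u xs v" "length xs = Suc n"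
  shows "dist E u v \<le> n"
  unfolding dist_def by (rule Least_le) (use assms in blast)

lemma dist_walk:
  assumes "connected_graph V E" "u \<in> V" "v \<in> V"
  shows "\<exists>xs. walk_betw E u xs v \<and> length xs = Suc (dist E u v)"
proof -
  obtain xs where xs: "walk_betw E u xs v" using assms unfolding connected_graph_def by blast
  then have "xs \<noteq> []" using walk_nonempty unfolding walk_betw_def by blast
  then have "\<exists>n ys. walk_betw E u ys v \<and> length ys = Suc n"
    using xs by (intro exI[of _ "length xs - 1"] exI[of _ xs]) auto
  then have "\<exists>ys. walk_betw E u ys v \<and> length ys = Suc (LEAST n. \<exists>ys. walk_betw E u ys v \<and> length ys = Suc n)"
    by (rule LeastI_ex)
  then show ?thesis unfolding dist_def by blast
qed

lemma dist_self: "dist E u u = 0"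
  using dist_le[of E u "[u]" u 0] by (simp add: walk_betw_def)

lemma dist_0:
  assumes "connected_graph V E" "u \<in> V" "v \<in> V" "dist E u v = 0"
  shows "u = v"
proof -
  obtain xs where "walk_betw E u xs v" "length xs = Suc 0" using dist_walk[OF assms(1-3)] assms(4) by auto
  then show ?thesis by (cases xs) (auto simp: walk_betw_def)
qed

lemma dist_1:
  assumes "simple_graph V E" "connected_graph V E" "u \<in> V" "v \<in> V"
  shows "dist E u v = 1 \<longleftrightarrow> E u v"
proof
  assume "dist E u v = 1"
  then obtain xs where "walk_betw E u xs v" "length xs = Suc (Suc 0)" using dist_walk[OF assms(2-4)] by auto
  moreover then obtain p q where "xs = [p,q]"
    by (metis length_0_conv length_Suc_conv)
  ultimately show "E u v" by (auto simp: walk_betw_def)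
next
  assume e: "E u v"
  then have "dist E u v \<le> 1" using dist_le[of E u "[u,v]" v 1] by (simp add: walk_betw_def)
  moreover have "u \<noteq> v" using e assms(1) unfolding simple_graph_def by auto
  then have "dist E u v \<noteq> 0" using dist_0[OF assms(2-4)] by auto
  ultimately show "dist E u v = 1" by simp
qed

lemma dist_2:
  assumes "simple_graph V E" "connected_graph V E" "u \<in> V" "v \<in> V"
    "E u z" "E z v" "u \<noteq> v" "\<not> E u v"
  shows "dist E u v = 2"
proof -
  have "dist E u v \<le> 2" using dist_le[of E u "[u,z,v]" v 2] assms by (simp add: walk_betw_def)
  moreover have "dist E u v \<noteq> 0" using dist_0[OF assms(2-4)] assms by auto
  moreover have "dist E u v \<noteq> 1" using dist_1[OF assms(1-4)] assms by auto
  ultimately show ?thesis by simp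
qed

lemma sphere1:
  assumes "simple_graph V E" "connected_graph V E" "x \<in> V"
  shows "v \<in> sphere V E 1 x \<longleftrightarrow> v \<in> V \<and> E v x"
  using dist_1[OF assms(1,2) _ assms(3)] unfolding sphere_def by auto

lemma key:
  assumes G: "simple_graph V E" and C: "connected_graph V E" and R: "reflective V E"
    and x: "x \<in> V"
  shows "walk E xs \<Longrightarrow> set xs \<subseteq> sphere V E 1 x \<Longrightarrow>
     hd xs = last xs \<or> E (hd xs) (last xs) \<or>
     (\<exists>z\<in>sphere V E 1 x. E (hd xs) z \<and> E z (last xs))"
proof (induction xs)
  case Nil then show ?case by simp
next
  case (Cons a rest)
  let ?S = "sphere V E 1 x"
  have S: "\<And>v. v \<in> ?S \<longleftrightarrow> v \<in> V \<and> E v x" using sphere1[OF G C x] by blast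
  have sym: "\<And>u v. E u v \<Longrightarrow> E v u" and irr: "\<And>u. \<not> E u u"
    using G unfolding simple_graph_def by blast+
  show ?case
  proof (cases rest)
    case Nil then show ?thesis by simp
  next
    case (Cons b vs)
    have ab: "E a b" using Cons.prems Cons by simp
    have IH: "b = last (b # vs) \<or> E b (last (b # vs)) \<or>
     (\<exists>z\<in>?S. E b z \<and> E z (last (b # vs)))"
      using Cons.IH Cons.prems Cons by simp
    define w where "w = last (b # vs)"
    have lw: "last (a # rest) = w" unfolding w_def Cons by simp
    have aS: "a \<in> ?S" and bS: "b \<in> ?S" and wS: "w \<in> ?S" using Cons.prems Cons unfolding w_def by auto
    consider "b = w" | "E b w" | z where "z \<in> ?S" "E b z" "E z w"
      using IH unfolding w_def by auto
    then have "a = w \<or> E a w \<or> (\<exists>z\<in>?S. E a z \<and> E z w)"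
    proof cases
      case 1 then show ?thesis using ab by simp
    next
      case 2 then show ?thesis using ab bS by blast
    next
      case (3 z)
      show ?thesis
      proof (rule ccontr)
        assume H: "\<not> ?thesis"
        have aV: "a \<in> V" and bV: "b \<in> V" and wV: "w \<in> V" and zV: "z \<in> V"
          and ax: "E a x" and bx: "E b x" and wx: "E w x" and zx: "E z x"
          using aS bS wS 3(1) S by auto
        have aw: "a \<noteq> w" "\<not> E a w" using H by auto
        have az: "a \<noteq> z" "\<not> E a z" using H 3 ab by auto
        have bw: "b \<noteq> w" "\<not> E b w" using H ab bS by auto
        obtain \<phi> where r: "reflection V E a b \<phi>" using R ab unfolding reflective_def by blast
        note rr = r[unfolded reflection_def graph_automorphism_def]
        note r1 = rr[THEN conjunct1] and r2 = rr[THEN conjunct2]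
        note r3 = r2[THEN conjunct2] note r4 = r3[THEN conjunct2] note r5 = r4[THEN conjunct2]
        note rr = r1 r2[THEN conjunct1] r3[THEN conjunct1] r5
        have aut: "\<And>u v. u \<in> V \<Longrightarrow> v \<in> V \<Longrightarrow> E (\<phi> u) (\<phi> v) \<longleftrightarrow> E u v"
          and bij: "bij_betw \<phi> V V" and inv: "\<And>v. v \<in> V \<Longrightarrow> \<phi> (\<phi> v) = v"
          and pa: "\<phi> a = b" and fx: "\<And>v. v \<in> midset V E a b \<Longrightarrow> \<phi> v = v"
          using rr by auto
        have pb: "\<phi> b = a" using inv[OF aV] pa by simp
        have "dist E x a = 1" "dist E x b = 1"
          using dist_1[OF G C x aV] dist_1[OF G C x bV] ax bx sym by auto
        then have px: "\<phi> x = x" using fx x unfolding midset_def by auto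
        have "dist E w a = 2" using dist_2[OF G C wV aV, of x] wx ax sym aw by auto
        moreover have "dist E w b = 2" using dist_2[OF G C wV bV, of x] wx bx sym bw by auto
        ultimately have pw: "\<phi> w = w" using fx wV unfolding midset_def by auto
        have pzV: "\<phi> z \<in> V" using bij zV unfolding bij_betw_def by auto
        have "E (\<phi> z) (\<phi> x)" using aut[OF zV x] zx by simp
        then have "\<phi> z \<in> ?S" using pzV px S by simp
        moreover have "E (\<phi> b) (\<phi> z)" using aut[OF bV zV] 3 by simp
        moreover have "E (\<phi> z) (\<phi> w)" using aut[OF zV wV] 3 by simp
        ultimately show False using H pb pw by auto
      qed
    qed
    then show ?thesis using lw Cons by simp
  qed
qed

theorem lemma2p10:
  fixes V :: "'a set" and E :: "'a \<Rightarrow> 'a \<Rightarrow> bool" and x :: 'a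
  assumes "simple_graph V E"
    and "connected_graph V E"
    and "reflective V E"
    and "x \<in> V"
    and "induced_connected E (sphere V E 1 x)"
  shows "isometric E (sphere V E 1 x)"
proof -
  let ?S = "sphere V E 1 x"
  note G = assms(1) and C = assms(2)
  have S: "\<And>v. v \<in> ?S \<longleftrightarrow> v \<in> V \<and> E v x" using sphere1[OF G C assms(4)] by blast
  show ?thesis unfolding isometric_def
  proof (intro ballI)
    fix w w' assume w: "w \<in> ?S" and w': "w' \<in> ?S"
    have wV: "w \<in> V" and w'V: "w' \<in> V" using w w' S by auto
    obtain xs where xs: "walk_betw E w xs w'" "set xs \<subseteq> ?S"
      using assms(5) w w' unfolding induced_connected_def by blast
    have K: "w = w' \<or> E w w' \<or> (\<exists>z\<in>?S. E w z \<and> E z w')"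
      using key[OF assms(1-4) _ xs(2)] xs(1) unfolding walk_betw_def by blast
    show "\<exists>xs. walk_betw E w xs w' \<and> length xs = Suc (dist E w w') \<and> set xs \<subseteq> ?S"
    proof (cases "w = w'")
      case True
      then show ?thesis using w dist_self[of E w]
        by (intro exI[of _ "[w]"]) (auto simp: walk_betw_def)
    next
      case False
      show ?thesis
      proof (cases "E w w'")
        case True
        then show ?thesis using w w' dist_1[OF G C wV w'V]
          by (intro exI[of _ "[w,w']"]) (auto simp: walk_betw_def)
      next
        case nE: False
        then obtain z where z: "z \<in> ?S" "E w z" "E z w'" using K False by blast
        have "dist E w w' = 2" using dist_2[OF G C wV w'V z(2,3)] False nE by simp
        then show ?thesis using w w' z
          by (intro exI[of _ "[w,z,w']"]) (auto simp: walk_betw_def)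
      qed
    qed
  qed
qed

end
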